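(* Let $A=\sigma(R)\langle x_1,\dots,x_n\rangle$ be a quasi-commutative bijective $\sigma$-PBW extension of a left Noetherian ring $R$. Let $c_1,\dots,c_t\in R\setminus\{0\}$ and let $\mathbf X_1=X_1\mathbf e_{i_1},\dots,\mathbf X_t=X_t\mathbf e_{i_t}$ be monomials of $A^m$ (the indices $i_1,\dots,i_t\in\{1,\dots,m\}$ need not be distinct). Let $L=[c_1\mathbf X_1\ \cdots\ c_t\mathbf X_t]$ and $$\mathrm{Syz}(L)=\{(h_1,\dots,h_t)^T\in A^t:\ h_1c_1\mathbf X_1+\dots+h_tc_t\mathbf X_t=\mathbf 0\}.$$ Then $\mathrm{Syz}(L)$ has a finite generating set consisting of homogeneous syzygies.
   Context: Let $R\subseteq A$ be rings. $A$ is a $\sigma$-PBW extension of $R$, written $A=\sigma(R)\langle x_1,\dots,x_n\rangle$, if there are $x_1,\dots,x_n\in A\setminus R$ such that: (i) $A$ is a free left $R$-module with basis $\mathrm{Mon}(A)=\{x^\alpha=x_1^{\alpha_1}\cdots x_n^{\alpha_n}:\alpha\in\mathbb N^n\}$, with $x^0=1$; (ii) for every $i$ and every $r\in R\setminus\{0\}$ there is $c_{i,r}\in R\setminus\{0\}$ with $x_ir-c_{i,r}x_i\in R$; (iii) for all $i,j$ there is $c_{i,j}\in R\setminus\{0\}$ with $x_jx_i-c_{i,j}x_ix_j\in R+Rx_1+\dots+Rx_n$. There are injective ring endomorphisms $\sigma_i$ of $R$ with $x_ir=\sigma_i(r)x_i+\delta_i(r)$, where $\delta_i$ are $\sigma_i$-derivations.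 $A$ is quasi-commutative if $x_ir=c_{i,r}x_i$ and $x_jx_i=c_{i,j}x_ix_j$ exactly. $A$ is bijective if each $\sigma_i$ is bijective and $c_{i,j}$ is invertible for $i<j$. $\mathrm{Mon}(A)$ carries a monomial order, i.e. a total order $\succeq$ with: - $x^\beta\succeq x^\alpha\Rightarrow lm(x^\gamma x^\beta x^\lambda)\succeq lm(x^\gamma x^\alpha x^\lambda)$; - $x^\alpha\succeq1$; - degree compatibility. $lm$ denotes the leading monomial; $lm(x^\alpha x^\beta)=x^{\alpha+\beta}$. $A^m$ is the free left $A$-module of column vectors with canonical basis $\mathbf e_1,\dots,\mathbf e_m$. Monomials of $A^m$ are $X\mathbf e_i$ with $X\in\mathrm{Mon}(A)$. A term of $A$ is an element $cx^\alpha$ with $c\in R$. A syzygy $\mathbf h=(h_1,\dots,h_t)^T\in\mathrm{Syz}(L)$ is homogeneous of degree $\mathbf X=X\mathbf e_i$ ($X\in\mathrm{Mon}(A)$) if: - each $h_j$ is a term; - for each $j$, either $h_j=0$ or $lm(lm(h_j)\mathbf X_j)=\mathbf X$, where $lm(x^\gamma\cdot x^\alpha\mathbf e_i)=x^{\gamma+\alpha}\mathbf e_i$. *)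

theory Defs
  imports Main
begin

text \<open>The ring A is modelled as the whole type 'a (a possibly noncommutative ring_1),
  R as a subset of it. Variables x_1..x_n are x 0, ..., x (n-1).\<close>

definition subring :: "'a::ring_1 set \<Rightarrow> bool" where
  "subring R \<longleftrightarrow> 0 \<in> R \<and> 1 \<in> R \<and> (\<forall>a\<in>R. \<forall>b\<in>R. a + b \<in> R \<and> a * b \<in> R \<and> - a \<in> R)"

definition Exps :: "nat \<Rightarrow> (nat \<Rightarrow> nat) set" where
  "Exps n = {\<alpha>. \<forall>i\<ge>n. \<alpha> i = 0}"

definition mono :: "(nat \<Rightarrow> 'a::ring_1) \<Rightarrow> nat \<Rightarrow> (nat \<Rightarrow> nat) \<Rightarrow> 'a" where
  "mono x n \<alpha> = prod_list (map (\<lambda>i. x i ^ \<alpha> i) [0..<n])"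

definition left_ideal_of :: "'a::ring_1 set \<Rightarrow> 'a set \<Rightarrow> bool" where
  "left_ideal_of R I \<longleftrightarrow> I \<subseteq> R \<and> 0 \<in> I \<and> (\<forall>a\<in>I. \<forall>b\<in>I. a + b \<in> I) \<and>
     (\<forall>r\<in>R. \<forall>a\<in>I. r * a \<in> I)"

definition left_noetherian :: "'a::ring_1 set \<Rightarrow> bool" where
  "left_noetherian R \<longleftrightarrow> (\<forall>I. left_ideal_of R I \<longrightarrow>
     (\<exists>F. finite F \<and> F \<subseteq> I \<and> I = {\<Sum>f\<in>F. r f * f | r. \<forall>f\<in>F. r f \<in> R}))"

definition sigma_PBW :: "'a::ring_1 set \<Rightarrow> nat \<Rightarrow> (nat \<Rightarrow> 'a) \<Rightarrow> bool" where
  "sigma_PBW R n x \<longleftrightarrow> subring R \<and>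
     (\<forall>i<n. x i \<notin> R) \<and>
     \<comment> \<open>(i) Mon(A) is a basis of A as a free left R-module\<close>
     (\<forall>a. \<exists>c. (\<forall>\<alpha>. c \<alpha> \<in> R) \<and> finite {\<alpha>. c \<alpha> \<noteq> 0} \<and> {\<alpha>. c \<alpha> \<noteq> 0} \<subseteq> Exps n \<and>
            a = (\<Sum>\<alpha>\<in>{\<alpha>. c \<alpha> \<noteq> 0}. c \<alpha> * mono x n \<alpha>)) \<and>
     (\<forall>c. (\<forall>\<alpha>. c \<alpha> \<in> R) \<and> finite {\<alpha>. c \<alpha> \<noteq> 0} \<and> {\<alpha>. c \<alpha> \<noteq> 0} \<subseteq> Exps n \<and>
            (\<Sum>\<alpha>\<in>{\<alpha>. c \<alpha> \<noteq> 0}. c \<alpha> * mono x n \<alpha>) = 0 \<longrightarrow> (\<forall>\<alpha>. c \<alpha> = 0)) \<and>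
     \<comment> \<open>(ii)\<close>
     (\<forall>i<n. \<forall>r\<in>R - {0}. \<exists>c\<in>R - {0}. x i * r - c * x i \<in> R) \<and>
     \<comment> \<open>(iii)\<close>
     (\<forall>i<n. \<forall>j<n. \<exists>c\<in>R - {0}. \<exists>r0\<in>R. \<exists>r. (\<forall>k<n. r k \<in> R) \<and>
            x j * x i - c * x i * x j = r0 + (\<Sum>k<n. r k * x k))"

definition quasi_commutative :: "'a::ring_1 set \<Rightarrow> nat \<Rightarrow> (nat \<Rightarrow> 'a) \<Rightarrow> bool" where
  "quasi_commutative R n x \<longleftrightarrow>
     (\<forall>i<n. \<forall>r\<in>R - {0}. \<exists>c\<in>R - {0}. x i * r = c * x i) \<and>
     (\<forall>i<n. \<forall>j<n. \<exists>c\<in>R - {0}. x j * x i = c * x i * x j)"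

text \<open>Bijective: each sigma_i (determined by x_i r - sigma_i(r) x_i in R, unique by (i)) is
  bijective on R, and each c_{i,j} (i<j) is invertible in R.\<close>
definition bijective_PBW :: "'a::ring_1 set \<Rightarrow> nat \<Rightarrow> (nat \<Rightarrow> 'a) \<Rightarrow> bool" where
  "bijective_PBW R n x \<longleftrightarrow>
     (\<forall>i<n. \<exists>\<sigma>. bij_betw \<sigma> R R \<and> (\<forall>r\<in>R. x i * r - \<sigma> r * x i \<in> R)) \<and>
     (\<forall>i j. i < j \<and> j < n \<longrightarrow> (\<forall>c\<in>R - {0}.
        (\<exists>r0\<in>R. \<exists>r. (\<forall>k<n. r k \<in> R) \<and> x j * x i - c * x i * x j = r0 + (\<Sum>k<n. r k * x k))
        \<longrightarrow> (\<exists>d\<in>R. c * d = 1 \<and> d * c = 1)))"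

text \<open>Vectors of A^t as functions nat => 'a vanishing from index t on.
  The generators are L = [c_1 X_1 ... c_t X_t] with X_j = x^(alpha j) e_(idx j)
  (0-based indices, idx j < m).  lin_comb gives h_1 c_1 X_1 + ... + h_t c_t X_t in A^m.\<close>
definition lin_comb :: "(nat \<Rightarrow> 'a::ring_1) \<Rightarrow> nat \<Rightarrow> nat \<Rightarrow> (nat \<Rightarrow> 'a) \<Rightarrow> (nat \<Rightarrow> nat \<Rightarrow> nat)
     \<Rightarrow> (nat \<Rightarrow> nat) \<Rightarrow> (nat \<Rightarrow> 'a) \<Rightarrow> (nat \<Rightarrow> 'a)" where
  "lin_comb x n t c alpha idx h =
     (\<lambda>k. \<Sum>j<t. h j * (c j * (if idx j = k then mono x n (alpha j) else 0)))"

definition Syz :: "(nat \<Rightarrow> 'a::ring_1) \<Rightarrow> nat \<Rightarrow> nat \<Rightarrow> (nat \<Rightarrow> 'a) \<Rightarrow> (nat \<Rightarrow> nat \<Rightarrow> nat)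
     \<Rightarrow> (nat \<Rightarrow> nat) \<Rightarrow> (nat \<Rightarrow> 'a) set" where
  "Syz x n t c alpha idx = {h. (\<forall>j\<ge>t. h j = 0) \<and> lin_comb x n t c alpha idx h = (\<lambda>k. 0)}"

text \<open>h is homogeneous of degree x^beta e_k: each h_j is a term r x^gamma, and if h_j \<noteq> 0
  then lm(lm(h_j) X_j) = x^(gamma + alpha_j) e_(idx j) = x^beta e_k.\<close>
definition homogeneous_of_degree :: "'a::ring_1 set \<Rightarrow> (nat \<Rightarrow> 'a) \<Rightarrow> nat \<Rightarrow> nat
     \<Rightarrow> (nat \<Rightarrow> nat \<Rightarrow> nat) \<Rightarrow> (nat \<Rightarrow> nat) \<Rightarrow> (nat \<Rightarrow> nat) \<Rightarrow> nat \<Rightarrow> (nat \<Rightarrow> 'a) \<Rightarrow> bool" where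
  "homogeneous_of_degree R x n t alpha idx \<beta> k h \<longleftrightarrow>
     (\<forall>j<t. (\<exists>r\<in>R. \<exists>\<gamma>\<in>Exps n. h j = r * mono x n \<gamma>) \<and>
            (h j = 0 \<or> (\<exists>r\<in>R. \<exists>\<gamma>\<in>Exps n. h j = r * mono x n \<gamma> \<and> r \<noteq> 0 \<and>
                          idx j = k \<and> (\<lambda>i. \<gamma> i + alpha j i) = \<beta>)))"

definition homogeneous_syz :: "'a::ring_1 set \<Rightarrow> (nat \<Rightarrow> 'a) \<Rightarrow> nat \<Rightarrow> nat \<Rightarrow> nat
     \<Rightarrow> (nat \<Rightarrow> nat \<Rightarrow> nat) \<Rightarrow> (nat \<Rightarrow> nat) \<Rightarrow> (nat \<Rightarrow> 'a) \<Rightarrow> bool" where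
  "homogeneous_syz R x n m t alpha idx h \<longleftrightarrow>
     (\<exists>\<beta>\<in>Exps n. \<exists>k<m. homogeneous_of_degree R x n t alpha idx \<beta> k h)"

end

theory Submission imports Defs begin

definition unitR :: "'a::ring_1 set \<Rightarrow> 'a \<Rightarrow> bool" where
  "unitR R u \<longleftrightarrow> u \<in> R \<and> (\<exists>v\<in>R. u * v = 1 \<and> v * u = 1)"

definition ev :: "nat \<Rightarrow> nat \<Rightarrow> nat" where "ev i = (\<lambda>k. if k = i then 1 else 0)"

definition addE :: "(nat \<Rightarrow> nat) \<Rightarrow> (nat \<Rightarrow> nat) \<Rightarrow> nat \<Rightarrow> nat" where
  "addE a b = (\<lambda>i. a i + b i)"

lemma prod_list_closed:
  assumes "P 1" "\<And>a b. P a \<Longrightarrow> P b \<Longrightarrow> P (a * b)" "\<forall>k\<in>set ks. P (f k)"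
  shows "P (prod_list (map f ks))"
  using assms(3) by (induction ks) (auto intro: assms(1,2))

lemma power_closed:
  assumes "P 1" "\<And>a b. P a \<Longrightarrow> P b \<Longrightarrow> P (a * b)" "P y"
  shows "P (y ^ k)"
  by (induction k) (auto intro: assms)


lemma comb_image:
  fixes r :: "'b \<Rightarrow> 'a::ring_1" and e :: "'b \<Rightarrow> nat \<Rightarrow> 'a"
  assumes "finite F"
  shows "(\<lambda>j. \<Sum>f\<in>F. r f * e f j) = (\<lambda>j. \<Sum>g\<in>e ` F. (\<Sum>f\<in>{f\<in>F. e f = g}. r f) * g j)"
proof
  fix j
  have "(\<Sum>g\<in>e ` F. \<Sum>f\<in>{f\<in>F. e f = g}. r f * e f j) = (\<Sum>f\<in>F. r f * e f j)"
    by (rule sum.group[OF assms]) (use assms in auto)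
  then have "(\<Sum>f\<in>F. r f * e f j) = (\<Sum>g\<in>e ` F. \<Sum>f\<in>{f\<in>F. e f = g}. r f * e f j)" by simp
  also have "\<dots> = (\<Sum>g\<in>e ` F. (\<Sum>f\<in>{f\<in>F. e f = g}. r f) * g j)"
    by (auto simp: sum_distrib_right intro!: sum.cong)
  finally show "(\<Sum>f\<in>F. r f * e f j) = (\<Sum>g\<in>e ` F. (\<Sum>f\<in>{f\<in>F. e f = g}. r f) * g j)" .
qed

lemma comb_mono:
  fixes a :: "(nat \<Rightarrow> 'a::ring_1) \<Rightarrow> 'a"
  assumes "finite S" "G \<subseteq> S"
  shows "(\<Sum>g\<in>G. a g * g j) = (\<Sum>s\<in>S. (if s \<in> G then a s else 0) * s j)"
proof -
  have "(\<Sum>s\<in>S. (if s \<in> G then a s else 0) * s j) = (\<Sum>s\<in>S. if s \<in> G then a s * s j else 0)"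
    by (intro sum.cong) auto
  also have "\<dots> = (\<Sum>s\<in>S \<inter> G. a s * s j)" using assms(1) by (simp add: sum.inter_restrict)
  also have "S \<inter> G = G" using assms(2) by auto
  finally show ?thesis by simp
qed

lemma comb_union:
  fixes a b :: "(nat \<Rightarrow> 'a::ring_1) \<Rightarrow> 'a"
  assumes "finite A" "finite B"
  shows "(\<Sum>f\<in>A. a f * f j) + (\<Sum>f\<in>B. b f * f j) =
     (\<Sum>f\<in>A \<union> B. ((if f \<in> A then a f else 0) + (if f \<in> B then b f else 0)) * f j)"
proof -
  have 1: "(\<Sum>f\<in>A. a f * f j) = (\<Sum>f\<in>A\<union>B. (if f\<in>A then a f else 0) * f j)"
    by (rule comb_mono) (use assms in auto)
  have 2: "(\<Sum>f\<in>B. b f * f j) = (\<Sum>f\<in>A\<union>B. (if f\<in>B then b f else 0) * f j)"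
    by (rule comb_mono) (use assms in auto)
  show ?thesis unfolding 1 2 by (simp add: distrib_right sum.distrib)
qed

locale pbw =
  fixes R :: "'a::ring_1 set" and n :: nat and x :: "nat \<Rightarrow> 'a"
  assumes spbw: "sigma_PBW R n x" and qc: "quasi_commutative R n x" and bj: "bijective_PBW R n x"
begin

abbreviation M where "M \<equiv> mono x n"

lemma sub: "subring R" using spbw unfolding sigma_PBW_def by auto

lemma R0[simp]: "0 \<in> R" and R1[simp]: "1 \<in> R"
  using sub unfolding subring_def by auto
lemma Radd[intro]: "a \<in> R \<Longrightarrow> b \<in> R \<Longrightarrow> a + b \<in> R"
  using sub unfolding subring_def by auto
lemma Rmult[intro]: "a \<in> R \<Longrightarrow> b \<in> R \<Longrightarrow> a * b \<in> R"
  using sub unfolding subring_def by auto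
lemma Rneg[intro]: "a \<in> R \<Longrightarrow> - a \<in> R"
  using sub unfolding subring_def by auto
lemma Rdiff[intro]: "a \<in> R \<Longrightarrow> b \<in> R \<Longrightarrow> a - b \<in> R"
  using Radd Rneg by (metis diff_conv_add_uminus)
lemma Rsum[intro]: "(\<And>i. i \<in> F \<Longrightarrow> f i \<in> R) \<Longrightarrow> sum f F \<in> R"
  by (induction F rule: infinite_finite_induct) auto

lemma spbw1: "\<forall>a. \<exists>c. (\<forall>\<alpha>. c \<alpha> \<in> R) \<and> finite {\<alpha>. c \<alpha> \<noteq> 0} \<and> {\<alpha>. c \<alpha> \<noteq> 0} \<subseteq> Exps n \<and>
            a = (\<Sum>\<alpha>\<in>{\<alpha>. c \<alpha> \<noteq> 0}. c \<alpha> * M \<alpha>)"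
  using spbw unfolding sigma_PBW_def by (elim conjE) assumption
lemma spbw2: "\<forall>c. (\<forall>\<alpha>. c \<alpha> \<in> R) \<and> finite {\<alpha>. c \<alpha> \<noteq> 0} \<and> {\<alpha>. c \<alpha> \<noteq> 0} \<subseteq> Exps n \<and>
            (\<Sum>\<alpha>\<in>{\<alpha>. c \<alpha> \<noteq> 0}. c \<alpha> * M \<alpha>) = 0 \<longrightarrow> (\<forall>\<alpha>. c \<alpha> = 0)"
  using spbw unfolding sigma_PBW_def by (elim conjE) assumption

lemma span: "\<exists>c. (\<forall>\<alpha>. c \<alpha> \<in> R) \<and> finite {\<alpha>. c \<alpha> \<noteq> 0} \<and> {\<alpha>. c \<alpha> \<noteq> 0} \<subseteq> Exps n \<and>
            a = (\<Sum>\<alpha>\<in>{\<alpha>. c \<alpha> \<noteq> 0}. c \<alpha> * M \<alpha>)"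
  using spbw1 by blast

lemma indep:
  assumes "finite F" "F \<subseteq> Exps n" "\<forall>\<alpha>\<in>F. d \<alpha> \<in> R" "(\<Sum>\<alpha>\<in>F. d \<alpha> * M \<alpha>) = 0"
  shows "\<forall>\<alpha>\<in>F. d \<alpha> = 0"
proof -
  define c where "c = (\<lambda>\<alpha>. if \<alpha> \<in> F then d \<alpha> else 0)"
  have sub1: "{\<alpha>. c \<alpha> \<noteq> 0} \<subseteq> F" unfolding c_def by auto
  have fin: "finite {\<alpha>. c \<alpha> \<noteq> 0}" using sub1 assms(1) finite_subset by blast
  have "(\<Sum>\<alpha>\<in>{\<alpha>. c \<alpha> \<noteq> 0}. c \<alpha> * M \<alpha>) = (\<Sum>\<alpha>\<in>F. c \<alpha> * M \<alpha>)"
    by (rule sum.mono_neutral_left[OF assms(1) sub1]) auto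
  also have "\<dots> = 0" using assms(4) unfolding c_def by simp
  finally have z: "(\<Sum>\<alpha>\<in>{\<alpha>. c \<alpha> \<noteq> 0}. c \<alpha> * M \<alpha>) = 0" .
  have "\<forall>\<alpha>. c \<alpha> \<in> R" using assms(3) unfolding c_def by auto
  then have "\<forall>\<alpha>. c \<alpha> = 0" using spbw2 fin sub1 assms(2) z by blast
  then show ?thesis unfolding c_def by (metis)
qed

lemma exps0[simp]: "(\<lambda>_. 0) \<in> Exps n" unfolding Exps_def by auto
lemma exps_ev: "i < n \<Longrightarrow> ev i \<in> Exps n" unfolding Exps_def ev_def by auto
lemma exps_add: "a \<in> Exps n \<Longrightarrow> b \<in> Exps n \<Longrightarrow> addE a b \<in> Exps n"
  unfolding Exps_def addE_def by auto

lemma M0: "M (\<lambda>_. 0) = 1"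
  unfolding mono_def by (induction n) auto

lemma prod_ones: "(\<forall>k\<in>set ks. f k = 1) \<Longrightarrow> prod_list (map f ks) = (1::'a)"
  by (induction ks) auto

lemma split_upt: "i < n \<Longrightarrow> [0..<n] = [0..<i] @ i # [Suc i..<n]"
proof -
  assume a: "i < n"
  have "[0..<n] = [0..<i] @ [i..<n]" using upt_add_eq_append[of 0 i "n-i"] a by simp
  then show ?thesis using upt_conv_Cons[OF a] by simp
qed

lemma M_split: "i < n \<Longrightarrow> M g = prod_list (map (\<lambda>k. x k ^ g k) [0..<i]) * x i ^ g i
      * prod_list (map (\<lambda>k. x k ^ g k) [Suc i..<n])"
  unfolding mono_def by (subst split_upt, assumption) (simp add: mult.assoc)

lemma Mev: "i < n \<Longrightarrow> M (ev i) = x i"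
  apply (subst M_split[of i], assumption)
  apply (subst prod_ones, simp add: ev_def)+
  by (simp add: ev_def)

lemma nz: "r \<in> R \<Longrightarrow> r \<noteq> 0 \<Longrightarrow> g \<in> Exps n \<Longrightarrow> r * M g \<noteq> 0"
  using indep[of "{g}" "\<lambda>_. r"] by auto

lemma L4: assumes "a \<in> R" "b \<in> R" "i < n" "a * x i = b" shows "a = 0"
proof -
  have ne: "ev i \<noteq> (\<lambda>_. 0)" unfolding ev_def by (metis one_neq_zero)
  define d where "d = (\<lambda>g. if g = ev i then a else - b)"
  have "(\<Sum>g\<in>{ev i, (\<lambda>_. 0)}. d g * M g) = a * x i - b"
    using ne by (simp add: d_def Mev[OF assms(3)] M0)
  then have "\<forall>g\<in>{ev i, (\<lambda>_. 0)}. d g = 0"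
    using assms by (intro indep) (auto simp: exps_ev d_def)
  then show ?thesis unfolding d_def by auto
qed


lemma qcA: "\<forall>i<n. \<forall>r\<in>R - {0}. \<exists>c\<in>R - {0}. x i * r = c * x i"
  using qc unfolding quasi_commutative_def by (elim conjE) assumption
lemma qcB: "\<forall>i<n. \<forall>j<n. \<exists>c\<in>R - {0}. x j * x i = c * x i * x j"
  using qc unfolding quasi_commutative_def by (elim conjE) assumption
lemma bjA: "\<forall>i<n. \<exists>\<sigma>. bij_betw \<sigma> R R \<and> (\<forall>r\<in>R. x i * r - \<sigma> r * x i \<in> R)"
  using bj unfolding bijective_PBW_def by (elim conjE) assumption
lemma bjB: "\<forall>i j. i < j \<and> j < n \<longrightarrow> (\<forall>c\<in>R - {0}.
        (\<exists>r0\<in>R. \<exists>r. (\<forall>k<n. r k \<in> R) \<and> x j * x i - c * x i * x j = r0 + (\<Sum>k<n. r k * x k))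
        \<longrightarrow> (\<exists>d\<in>R. c * d = 1 \<and> d * c = 1))"
  using bj unfolding bijective_PBW_def by (elim conjE) assumption

lemma unit1: "unitR R 1" unfolding unitR_def by auto
lemma unitR_in: "unitR R u \<Longrightarrow> u \<in> R" unfolding unitR_def by auto
lemma unit_mult: assumes "unitR R a" "unitR R b" shows "unitR R (a * b)"
proof -
  obtain va where va: "va \<in> R" "a * va = 1" "va * a = 1" "a \<in> R" using assms(1) unfolding unitR_def by auto
  obtain vb where vb: "vb \<in> R" "b * vb = 1" "vb * b = 1" "b \<in> R" using assms(2) unfolding unitR_def by auto
  have "a * b * (vb * va) = 1" by (metis mult.assoc mult_1_right va(2) vb(2))
  moreover have "vb * va * (a * b) = 1" by (metis mult.assoc mult_1_left va(3) vb(3))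
  ultimately show ?thesis unfolding unitR_def using va vb by blast
qed
lemma unit_nz: "unitR R u \<Longrightarrow> r * u = 0 \<Longrightarrow> r = 0"
  unfolding unitR_def by (metis mult.assoc mult_1_right mult_zero_left)

definition PushR where "PushR y \<longleftrightarrow> (\<forall>r\<in>R. \<exists>r'\<in>R. y * r = r' * y \<and> (r \<noteq> 0 \<longrightarrow> r' \<noteq> 0))"
definition PullR where "PullR y \<longleftrightarrow> (\<forall>s\<in>R. \<exists>r\<in>R. y * r = s * y)"
definition PushU where "PushU y \<longleftrightarrow> (\<forall>u. unitR R u \<longrightarrow> (\<exists>u'. unitR R u' \<and> y * u = u' * y))"
definition CommU where "CommU i y \<longleftrightarrow> (\<exists>u. unitR R u \<and> y * x i = u * x i * y)"
definition Good where "Good y \<longleftrightarrow> PushR y \<and> PullR y \<and> PushU y"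

lemma Good1: "Good 1" unfolding Good_def PushR_def PullR_def PushU_def by auto

lemma Good_mult: assumes "Good a" "Good b" shows "Good (a * b)"
proof -
  have "PushR (a * b)" unfolding PushR_def
  proof
    fix r assume r: "r \<in> R"
    obtain r1 where r1: "r1 \<in> R" "b * r = r1 * b" "r \<noteq> 0 \<longrightarrow> r1 \<noteq> 0"
      using assms(2) r unfolding Good_def PushR_def by blast
    obtain r2 where r2: "r2 \<in> R" "a * r1 = r2 * a" "r1 \<noteq> 0 \<longrightarrow> r2 \<noteq> 0"
      using assms(1) r1(1) unfolding Good_def PushR_def by blast
    have "a * b * r = r2 * (a * b)" by (metis mult.assoc r1(2) r2(2))
    then show "\<exists>r'\<in>R. a * b * r = r' * (a * b) \<and> (r \<noteq> 0 \<longrightarrow> r' \<noteq> 0)" using r1 r2 by blast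
  qed
  moreover have "PullR (a * b)" unfolding PullR_def
  proof
    fix s assume s: "s \<in> R"
    obtain r1 where r1: "r1 \<in> R" "a * r1 = s * a"
      using assms(1) s unfolding Good_def PullR_def by blast
    obtain r where r: "r \<in> R" "b * r = r1 * b"
      using assms(2) r1(1) unfolding Good_def PullR_def by blast
    have "a * b * r = s * (a * b)" by (metis mult.assoc r1(2) r(2))
    then show "\<exists>r\<in>R. a * b * r = s * (a * b)" using r by blast
  qed
  moreover have "PushU (a * b)" unfolding PushU_def
  proof (intro allI impI)
    fix u assume u: "unitR R u"
    obtain r1 where r1: "unitR R r1" "b * u = r1 * b"
      using assms(2) u unfolding Good_def PushU_def by blast
    obtain r2 where r2: "unitR R r2" "a * r1 = r2 * a"
      using assms(1) r1(1) unfolding Good_def PushU_def by blast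
    have "a * b * u = r2 * (a * b)" by (metis mult.assoc r1(2) r2(2))
    then show "\<exists>u'. unitR R u' \<and> a * b * u = u' * (a * b)" using r2 by blast
  qed
  ultimately show ?thesis unfolding Good_def by blast
qed

lemma PushU_mult: assumes "PushU a" "PushU b" shows "PushU (a * b)"
  unfolding PushU_def
  proof (intro allI impI)
    fix u assume u: "unitR R u"
    obtain r1 where r1: "unitR R r1" "b * u = r1 * b"
      using assms(2) u unfolding PushU_def by blast
    obtain r2 where r2: "unitR R r2" "a * r1 = r2 * a"
      using assms(1) r1(1) unfolding PushU_def by blast
    have "a * b * u = r2 * (a * b)" by (metis mult.assoc r1(2) r2(2))
    then show "\<exists>u'. unitR R u' \<and> a * b * u = u' * (a * b)" using r2 by blast
  qed

lemma Comm_mult: assumes "PushU a" "CommU i a" "CommU i b" shows "CommU i (a * b)"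
proof -
  obtain ub where ub: "unitR R ub" "b * x i = ub * x i * b" using assms(3) unfolding CommU_def by blast
  obtain ua where ua: "unitR R ua" "a * x i = ua * x i * a" using assms(2) unfolding CommU_def by blast
  obtain u' where u': "unitR R u'" "a * ub = u' * a" using assms(1) ub(1) unfolding PushU_def by blast
  have "a * b * x i = a * ub * x i * b" using ub(2) by (simp add: mult.assoc)
  also have "\<dots> = u' * (a * x i) * b" using u'(2) by (simp add: mult.assoc)
  also have "\<dots> = (u' * ua) * x i * (a * b)" using ua(2) by (simp add: mult.assoc)
  finally show ?thesis unfolding CommU_def using unit_mult[OF u'(1) ua(1)] by blast
qed

lemma PC_mult: "PushU a \<and> CommU i a \<Longrightarrow> PushU b \<and> CommU i b \<Longrightarrow> PushU (a * b) \<and> CommU i (a * b)"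
  using Comm_mult PushU_mult by blast

lemma PC1: "PushU 1 \<and> CommU i 1" using Good1 unit1 unfolding Good_def CommU_def by auto

lemma Good_x: assumes i: "i < n" shows "Good (x i)"
proof -
  have pr: "PushR (x i)" unfolding PushR_def
  proof
    fix r assume r: "r \<in> R"
    show "\<exists>r'\<in>R. x i * r = r' * x i \<and> (r \<noteq> 0 \<longrightarrow> r' \<noteq> 0)"
    proof (cases "r = 0")
      case True then show ?thesis by (intro bexI[of _ 0]) auto
    next
      case False then show ?thesis using qcA i r by blast
    qed
  qed
  have "PullR (x i)" unfolding PullR_def
  proof
    fix s assume s: "s \<in> R"
    obtain \<sigma> where sg: "bij_betw \<sigma> R R" "\<forall>r\<in>R. x i * r - \<sigma> r * x i \<in> R" using bjA i by blast
    obtain r where r: "r \<in> R" "\<sigma> r = s" using sg(1) s unfolding bij_betw_def by (metis imageE)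
    obtain c where c: "c \<in> R" "x i * r = c * x i" using pr r unfolding PushR_def by blast
    have "x i * r - \<sigma> r * x i \<in> R" using sg(2) r by blast
    moreover have "x i * r - \<sigma> r * x i = (c - s) * x i" using c r by (simp add: algebra_simps)
    ultimately have "(c - s) * x i \<in> R" by simp
    then have "c - s = 0" using L4[of "c - s" "(c - s) * x i" i] c(1) s i by blast
    then show "\<exists>r\<in>R. x i * r = s * x i" using r c by auto
  qed
  moreover have "PushU (x i)" unfolding PushU_def
  proof (intro allI impI)
    fix u assume u: "unitR R u"
    obtain v where v: "v \<in> R" "u * v = 1" "v * u = 1" "u \<in> R" using u unfolding unitR_def by auto
    obtain u' where u': "u' \<in> R" "x i * u = u' * x i" using pr v(4) unfolding PushR_def by blast
    obtain v' where v': "v' \<in> R" "x i * v = v' * x i" using pr v(1) unfolding PushR_def by blast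
    have "x i = u' * v' * x i" by (metis mult.assoc mult_1_right u'(2) v'(2) v(2))
    then have "(1 - u' * v') * x i = 0" by (simp add: algebra_simps)
    moreover have "1 - u' * v' \<in> R" using u'(1) v'(1) by (intro Rdiff Rmult R1)
    ultimately have e1: "u' * v' = 1" using L4[of "1 - u' * v'" 0 i] i by auto
    have "x i = v' * u' * x i" by (metis mult.assoc mult_1_right u'(2) v'(2) v(3))
    then have "(1 - v' * u') * x i = 0" by (simp add: algebra_simps)
    moreover have "1 - v' * u' \<in> R" using u'(1) v'(1) by (intro Rdiff Rmult R1)
    ultimately have e2: "v' * u' = 1" using L4[of "1 - v' * u'" 0 i] i by auto
    show "\<exists>u'. unitR R u' \<and> x i * u = u' * x i" unfolding unitR_def using u' v' e1 e2 by blast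
  qed
  ultimately show ?thesis using pr unfolding Good_def by blast
qed

lemma Good_pow: "k < n \<Longrightarrow> Good (x k ^ a)"
  by (rule power_closed[where P=Good]) (auto intro: Good1 Good_mult Good_x)

lemma Good_M: "Good (M g)"
  unfolding mono_def
  by (rule prod_list_closed[where P=Good]) (auto intro: Good1 Good_mult Good_pow)

lemma Comm_x: assumes "i < k" "k < n" shows "CommU i (x k)"
proof -
  have "i < n" using assms by simp
  then have "\<exists>c\<in>R - {0}. x k * x i = c * x i * x k" using qcB assms(2) by blast
  then obtain c where c: "c \<in> R - {0}" "x k * x i = c * x i * x k" by blast
  have imp: "(\<exists>r0\<in>R. \<exists>r. (\<forall>k<n. r k \<in> R) \<and> x k * x i - c * x i * x k = r0 + (\<Sum>k<n. r k * x k))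
        \<longrightarrow> (\<exists>d\<in>R. c * d = 1 \<and> d * c = 1)" using bjB assms c(1) by blast
  have "\<exists>r0\<in>R. \<exists>r. (\<forall>k<n. r k \<in> R) \<and> x k * x i - c * x i * x k = r0 + (\<Sum>k<n. r k * x k)"
    using c by (intro bexI[of _ 0] exI[of _ "\<lambda>_. 0"]) auto
  with imp obtain d where "d \<in> R" "c * d = 1" "d * c = 1" by blast
  then have "unitR R c" unfolding unitR_def using c by auto
  then show ?thesis unfolding CommU_def using c by blast
qed

lemma K: assumes i: "i < n" shows "\<exists>u. unitR R u \<and> M g * x i = u * M (g(i := Suc (g i)))"
proof -
  define A where "A = prod_list (map (\<lambda>k. x k ^ g k) [0..<i])"
  define B where "B = prod_list (map (\<lambda>k. x k ^ g k) [Suc i..<n])"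
  let ?g = "g(i := Suc (g i))"
  have eA: "prod_list (map (\<lambda>k. x k ^ ?g k) [0..<i]) = A" unfolding A_def
    by (intro arg_cong[where f=prod_list] map_cong) auto
  have eB: "prod_list (map (\<lambda>k. x k ^ ?g k) [Suc i..<n]) = B" unfolding B_def
    by (intro arg_cong[where f=prod_list] map_cong) auto
  have Mg: "M g = A * x i ^ g i * B" unfolding A_def B_def using M_split[OF i] .
  have Mg': "M ?g = A * x i ^ Suc (g i) * B" using M_split[OF i, of ?g] eA eB by simp
  have "PushU B \<and> CommU i B" unfolding B_def
  proof (rule prod_list_closed)
    show "PushU 1 \<and> CommU i 1" by (rule PC1)
    show "\<And>a b. PushU a \<and> CommU i a \<Longrightarrow> PushU b \<and> CommU i b \<Longrightarrow> PushU (a * b) \<and> CommU i (a * b)"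
      by (rule PC_mult)
    show "\<forall>k\<in>set [Suc i..<n]. PushU (x k ^ g k) \<and> CommU i (x k ^ g k)"
    proof
      fix k assume "k \<in> set [Suc i..<n]"
      then have k: "i < k" "k < n" by auto
      show "PushU (x k ^ g k) \<and> CommU i (x k ^ g k)"
      proof (rule power_closed[where P="\<lambda>y. PushU y \<and> CommU i y"])
        show "PushU 1 \<and> CommU i 1" by (rule PC1)
        show "\<And>a b. PushU a \<and> CommU i a \<Longrightarrow> PushU b \<and> CommU i b \<Longrightarrow> PushU (a * b) \<and> CommU i (a * b)"
          by (rule PC_mult)
        show "PushU (x k) \<and> CommU i (x k)" using Good_x[OF k(2)] Comm_x[OF k] unfolding Good_def by auto
      qed
    qed
  qed
  then obtain u where u: "unitR R u" "B * x i = u * x i * B" unfolding CommU_def by blast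
  have gA0: "Good (x k ^ g k)" if "k < n" for k
    by (rule power_closed[where P=Good]) (auto intro: Good1 Good_mult Good_x that)
  have gA: "Good (A * x i ^ g i)" unfolding A_def
    using i by (intro Good_mult gA0 prod_list_closed[where P=Good]) (auto intro: Good1 Good_mult gA0)
  obtain u' where u': "unitR R u'" "A * x i ^ g i * u = u' * (A * x i ^ g i)"
    using gA u(1) unfolding Good_def PushU_def by blast
  have "M g * x i = A * x i ^ g i * (B * x i)" using Mg by (simp only: mult.assoc)
  also have "\<dots> = A * x i ^ g i * (u * x i * B)" using u(2) by (simp only:)
  also have "\<dots> = (A * x i ^ g i * u) * (x i * B)" by (simp only: mult.assoc)
  also have "\<dots> = u' * (A * x i ^ g i) * (x i * B)" using u'(2) by (simp only:)
  also have "\<dots> = u' * (A * x i ^ Suc (g i) * B)" by (simp only: mult.assoc power_Suc2)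
  also have "\<dots> = u' * M ?g" using Mg' by simp
  finally show ?thesis using u' by blast
qed


lemma exps_upd: "g \<in> Exps n \<Longrightarrow> i < n \<Longrightarrow> g(i := a) \<in> Exps n"
  unfolding Exps_def by auto

lemma MM_aux: "\<forall>a. a \<in> Exps n \<longrightarrow> sum a {..<n} = N \<longrightarrow>
     (\<exists>u. unitR R u \<and> M g * M a = u * M (addE g a))"
proof (induction N arbitrary: g rule: less_induct)
  case (less N)
  show ?case
  proof (intro allI impI)
    fix a assume a: "a \<in> Exps n" and sa: "sum a {..<n} = N"
    show "\<exists>u. unitR R u \<and> M g * M a = u * M (addE g a)"
    proof (cases "\<forall>k<n. a k = 0")
      case True
      have "a k = 0" for k using True a unfolding Exps_def by (cases "k < n") auto
      then have "a = (\<lambda>_. 0)" by (rule ext)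
      then have "M a = 1" "addE g a = g" using M0 unfolding addE_def by auto
      then show ?thesis using unit1 by auto
    next
      case False
      then obtain j where j: "j < n" "a j \<noteq> 0" by blast
      define a' where "a' = a(j := a j - 1)"
      have a'e: "a' \<in> Exps n" unfolding a'_def using exps_upd a j by blast
      have aa: "a = a'(j := Suc (a' j))" unfolding a'_def using j by auto
      have s1: "sum a {..<n} = a j + sum a ({..<n} - {j})" using j by (intro sum.remove) auto
      have s2: "sum a' {..<n} = a' j + sum a' ({..<n} - {j})" using j by (intro sum.remove) auto
      have s3: "sum a' ({..<n} - {j}) = sum a ({..<n} - {j})" unfolding a'_def by (intro sum.cong) auto
      have a'j: "a' j = a j - 1" unfolding a'_def by simp
      have lt: "sum a' {..<n} < N" using s1 s2 s3 sa j(2) a'j by arith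
      obtain w where w: "unitR R w" "M a' * x j = w * M a" using K[OF j(1), of a'] aa by auto
      obtain v where v: "v \<in> R" "w * v = 1" "v * w = 1" using w(1) unfolding unitR_def by auto
      have vu: "unitR R v" unfolding unitR_def using v unitR_in[OF w(1)] by auto
      have "v * (M a' * x j) = (v * w) * M a" using w(2) by (simp add: mult.assoc)
      then have Ma: "M a = v * M a' * x j" using v(3) by (simp add: mult.assoc)
      obtain v' where v': "unitR R v'" "M g * v = v' * M g" using Good_M vu unfolding Good_def PushU_def by blast
      obtain u1 where u1: "unitR R u1" "M g * M a' = u1 * M (addE g a')"
        using less.IH[OF lt] a'e by blast
      have upd: "(addE g a')(j := Suc (addE g a' j)) = addE g a" unfolding addE_def a'_def using j by (auto simp: fun_eq_iff)
      obtain u2 where u2: "unitR R u2" "M (addE g a') * x j = u2 * M (addE g a)"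
        using K[OF j(1), of "addE g a'"] upd by auto
      have "M g * M a = (M g * v) * M a' * x j" using Ma by (simp only: mult.assoc)
      also have "\<dots> = v' * (M g * M a') * x j" using v'(2) by (simp only: mult.assoc)
      also have "\<dots> = v' * u1 * (M (addE g a') * x j)" using u1(2) by (simp only: mult.assoc)
      also have "\<dots> = (v' * u1 * u2) * M (addE g a)" using u2(2) by (simp only: mult.assoc)
      finally show ?thesis using unit_mult[OF unit_mult[OF v'(1) u1(1)] u2(1)] by blast
    qed
  qed
qed

lemma MM: "a \<in> Exps n \<Longrightarrow> \<exists>u. unitR R u \<and> M g * M a = u * M (addE g a)"
  using MM_aux by blast

lemma P1: assumes "r \<in> R" "a \<in> Exps n"
  shows "\<exists>\<mu>\<in>R. M g * r * M a = \<mu> * M (addE g a) \<and> (r \<noteq> 0 \<longrightarrow> \<mu> \<noteq> 0)"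
proof -
  obtain r' where r': "r' \<in> R" "M g * r = r' * M g" "r \<noteq> 0 \<longrightarrow> r' \<noteq> 0"
    using Good_M assms(1) unfolding Good_def PushR_def by blast
  obtain u where u: "unitR R u" "M g * M a = u * M (addE g a)" using MM[OF assms(2)] by blast
  have "M g * r * M a = (r' * u) * M (addE g a)" using r'(2) u(2) by (metis mult.assoc)
  moreover have "r' * u \<in> R" using r'(1) unitR_in[OF u(1)] by blast
  moreover have "r' \<noteq> 0 \<longrightarrow> r' * u \<noteq> 0" using unit_nz[OF u(1)] by blast
  ultimately show ?thesis using r'(3) by blast
qed

lemma P2: assumes "s \<in> R" "a \<in> Exps n"
  shows "\<exists>r\<in>R. M g * r * M a = s * M (addE g a)"
proof -
  obtain u where u: "unitR R u" "M g * M a = u * M (addE g a)" using MM[OF assms(2)] by blast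
  obtain v where v: "v \<in> R" "u * v = 1" "v * u = 1" using u(1) unfolding unitR_def by auto
  obtain r where r: "r \<in> R" "M g * r = (s * v) * M g"
    using Good_M assms(1) v(1) unfolding Good_def PullR_def by blast
  have "M g * r * M a = s * (v * u) * M (addE g a)" using r(2) u(2) by (simp add: mult.assoc)
  then show ?thesis using r(1) v(3) by auto
qed

lemma cancel: assumes "\<rho> \<in> R" "M g * \<rho> * M a = 0" "g \<in> Exps n" "a \<in> Exps n" shows "\<rho> = 0"
proof (rule ccontr)
  assume ne: "\<rho> \<noteq> 0"
  obtain \<mu> where "\<mu> \<in> R" "M g * \<rho> * M a = \<mu> * M (addE g a)" "\<mu> \<noteq> 0" using P1[OF assms(1,4)] ne by blast
  then show False using nz exps_add[OF assms(3,4)] assms(2) by metis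
qed


lemma N_sum:
  assumes cl0: "(\<lambda>_. 0) \<in> N" and cladd: "\<forall>v\<in>N. \<forall>w\<in>N. (\<lambda>j. v j + w j) \<in> N"
    and clsc: "\<forall>r\<in>R. \<forall>v\<in>N. (\<lambda>j. r * v j) \<in> N"
  shows "finite F \<Longrightarrow> (\<forall>f\<in>F. u f \<in> N) \<Longrightarrow> (\<forall>f\<in>F. r f \<in> R) \<Longrightarrow> (\<lambda>j. \<Sum>f\<in>F. r f * u f j) \<in> N"
proof (induction F rule: finite_induct)
  case empty then show ?case using cl0 by simp
next
  case (insert f F)
  have "(\<lambda>j. r f * u f j) \<in> N" using clsc insert.prems by auto
  moreover have "(\<lambda>j. \<Sum>f\<in>F. r f * u f j) \<in> N" using insert by auto
  ultimately have "(\<lambda>j. r f * u f j + (\<Sum>f\<in>F. r f * u f j)) \<in> N"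
    using cladd[rule_format, of "\<lambda>j. r f * u f j" "\<lambda>j. \<Sum>f\<in>F. r f * u f j"] by simp
  then show ?case using insert.hyps by simp
qed

lemma noeth_mod:
  assumes noeth: "left_noetherian R" and finJ: "finite (J :: nat set)"
  shows "\<forall>N. (\<forall>v\<in>N. \<forall>j. v j \<in> R \<and> (j \<notin> J \<longrightarrow> v j = 0)) \<and> (\<lambda>_. 0) \<in> N \<and>
     (\<forall>v\<in>N. \<forall>w\<in>N. (\<lambda>j. v j + w j) \<in> N) \<and> (\<forall>r\<in>R. \<forall>v\<in>N. (\<lambda>j. r * v j) \<in> N) \<longrightarrow>
     (\<exists>F. finite F \<and> F \<subseteq> N \<and> (\<forall>v\<in>N. \<exists>r. (\<forall>f. r f \<in> R) \<and> v = (\<lambda>j. \<Sum>f\<in>F. r f * f j)))"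
  using finJ
proof (induction J rule: finite_induct)
  case empty
  show ?case
  proof (intro allI impI)
    fix N :: "(nat \<Rightarrow> 'a) set"
    assume "(\<forall>v\<in>N. \<forall>j. v j \<in> R \<and> (j \<notin> {} \<longrightarrow> v j = 0)) \<and> (\<lambda>_. 0) \<in> N \<and>
     (\<forall>v\<in>N. \<forall>w\<in>N. (\<lambda>j. v j + w j) \<in> N) \<and> (\<forall>r\<in>R. \<forall>v\<in>N. (\<lambda>j. r * v j) \<in> N)"
    then have "\<forall>v\<in>N. v = (\<lambda>_. 0)" by auto
    then show "\<exists>F. finite F \<and> F \<subseteq> N \<and> (\<forall>v\<in>N. \<exists>r. (\<forall>f. r f \<in> R) \<and> v = (\<lambda>j. \<Sum>f\<in>F. r f * f j))"
      by (intro exI[of _ "{}"]) auto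
  qed
next
  case (insert j0 J)
  show ?case
  proof (intro allI impI)
    fix N :: "(nat \<Rightarrow> 'a) set"
    assume H: "(\<forall>v\<in>N. \<forall>j. v j \<in> R \<and> (j \<notin> insert j0 J \<longrightarrow> v j = 0)) \<and> (\<lambda>_. 0) \<in> N \<and>
     (\<forall>v\<in>N. \<forall>w\<in>N. (\<lambda>j. v j + w j) \<in> N) \<and> (\<forall>r\<in>R. \<forall>v\<in>N. (\<lambda>j. r * v j) \<in> N)"
    then have Hs: "\<forall>v\<in>N. \<forall>j. v j \<in> R" "\<forall>v\<in>N. \<forall>j. j \<notin> insert j0 J \<longrightarrow> v j = 0"
      "(\<lambda>_. 0) \<in> N" "\<forall>v\<in>N. \<forall>w\<in>N. (\<lambda>j. v j + w j) \<in> N" "\<forall>r\<in>R. \<forall>v\<in>N. (\<lambda>j. r * v j) \<in> N"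
      by auto
    define I where "I = (\<lambda>v. v j0) ` N"
    have "left_ideal_of R I" unfolding left_ideal_of_def I_def
    proof (intro conjI)
      show "(\<lambda>v. v j0) ` N \<subseteq> R" using Hs(1) by auto
      show "0 \<in> (\<lambda>v. v j0) ` N" using Hs(3) by force
      show "\<forall>a\<in>(\<lambda>v. v j0) ` N. \<forall>b\<in>(\<lambda>v. v j0) ` N. a + b \<in> (\<lambda>v. v j0) ` N"
      proof (intro ballI)
        fix a b assume "a \<in> (\<lambda>v. v j0) ` N" "b \<in> (\<lambda>v. v j0) ` N"
        then obtain v w where "v \<in> N" "w \<in> N" "a = v j0" "b = w j0" by auto
        then show "a + b \<in> (\<lambda>v. v j0) ` N" using Hs(4) by (intro image_eqI[of _ _ "\<lambda>j. v j + w j"]) auto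
      qed
      show "\<forall>r\<in>R. \<forall>a\<in>(\<lambda>v. v j0) ` N. r * a \<in> (\<lambda>v. v j0) ` N"
      proof (intro ballI)
        fix r a assume "r \<in> R" "a \<in> (\<lambda>v. v j0) ` N"
        then obtain v where "v \<in> N" "a = v j0" by auto
        then show "r * a \<in> (\<lambda>v. v j0) ` N" using Hs(5) \<open>r \<in> R\<close> by (intro image_eqI[of _ _ "\<lambda>j. r * v j"]) auto
      qed
    qed
    moreover have LN: "\<forall>I. left_ideal_of R I \<longrightarrow> (\<exists>F. finite F \<and> F \<subseteq> I \<and> I = {\<Sum>f\<in>F. r f * f | r. \<forall>f\<in>F. r f \<in> R})"
      using noeth unfolding left_noetherian_def .
    ultimately have "\<exists>F. finite F \<and> F \<subseteq> I \<and> I = {\<Sum>f\<in>F. r f * f | r. \<forall>f\<in>F. r f \<in> R}" by blast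
    then obtain F0 where F0: "finite F0" "F0 \<subseteq> I" "I = {\<Sum>f\<in>F0. r f * f | r. \<forall>f\<in>F0. r f \<in> R}"
      by (elim exE conjE) blast
    have "\<forall>f\<in>F0. \<exists>w. w \<in> N \<and> w j0 = f" using F0(2) unfolding I_def by auto
    from bchoice[OF this] obtain w where w: "\<forall>f\<in>F0. w f \<in> N \<and> w f j0 = f" by blast
    define N' where "N' = {v\<in>N. v j0 = 0}"
    have "(\<forall>v\<in>N'. \<forall>j. v j \<in> R \<and> (j \<notin> J \<longrightarrow> v j = 0)) \<and> (\<lambda>_. 0) \<in> N' \<and>
     (\<forall>v\<in>N'. \<forall>w\<in>N'. (\<lambda>j. v j + w j) \<in> N') \<and> (\<forall>r\<in>R. \<forall>v\<in>N'. (\<lambda>j. r * v j) \<in> N')"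
    proof -
      have 1: "\<forall>v\<in>N'. \<forall>j. v j \<in> R \<and> (j \<notin> J \<longrightarrow> v j = 0)"
      proof (intro ballI allI)
        fix v j assume "v \<in> N'"
        then show "v j \<in> R \<and> (j \<notin> J \<longrightarrow> v j = 0)" unfolding N'_def using Hs(1,2) by auto
      qed
      have 2: "(\<lambda>_. 0) \<in> N'" unfolding N'_def using Hs(3) by simp
      have 3: "\<forall>v\<in>N'. \<forall>w\<in>N'. (\<lambda>j. v j + w j) \<in> N'"
      proof (intro ballI)
        fix v w assume "v \<in> N'" "w \<in> N'"
        then show "(\<lambda>j. v j + w j) \<in> N'" unfolding N'_def using Hs(4) by simp
      qed
      have 4: "\<forall>r\<in>R. \<forall>v\<in>N'. (\<lambda>j. r * v j) \<in> N'"
      proof (intro ballI)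
        fix r v assume "r \<in> R" "v \<in> N'"
        then show "(\<lambda>j. r * v j) \<in> N'" unfolding N'_def using Hs(5) by simp
      qed
      show ?thesis using 1 2 3 4 by blast
    qed
    note NP = this
    obtain F' where F': "finite F'" "F' \<subseteq> N'" "\<forall>v\<in>N'. \<exists>r. (\<forall>f. r f \<in> R) \<and> v = (\<lambda>j. \<Sum>f\<in>F'. r f * f j)"
      using insert.IH[rule_format, OF NP] by (elim exE conjE) blast
    define F where "F = w ` F0 \<union> F'"
    show "\<exists>F. finite F \<and> F \<subseteq> N \<and> (\<forall>v\<in>N. \<exists>r. (\<forall>f. r f \<in> R) \<and> v = (\<lambda>j. \<Sum>f\<in>F. r f * f j))"
    proof (intro exI[of _ F] conjI ballI)
      show "finite F" unfolding F_def using F0(1) F'(1) by auto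
      show "F \<subseteq> N" unfolding F_def using w F'(2) N'_def by auto
      fix v assume v: "v \<in> N"
      then have "v j0 \<in> I" unfolding I_def by auto
      then have "v j0 \<in> {\<Sum>f\<in>F0. r f * f | r. \<forall>f\<in>F0. r f \<in> R}" using F0(3) by simp
      then obtain r where r: "\<forall>f\<in>F0. r f \<in> R" "v j0 = (\<Sum>f\<in>F0. r f * f)" by blast
      define z where "z = (\<lambda>j. \<Sum>f\<in>F0. r f * w f j)"
      have zN: "z \<in> N" unfolding z_def using N_sum[OF Hs(3) Hs(4) Hs(5) F0(1)] w r(1) by auto
      have zj0: "z j0 = v j0" unfolding z_def r(2) using w by (intro sum.cong) auto
      define v' where "v' = (\<lambda>j. v j + (- 1) * z j)"
      have "(\<lambda>j. (- 1) * z j) \<in> N" using Hs(5)[rule_format, OF Rneg[OF R1] zN] .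
      then have "v' \<in> N" unfolding v'_def using Hs(4)[rule_format, OF v, of "\<lambda>j. (- 1) * z j"] by simp
      moreover have "v' j0 = 0" unfolding v'_def using zj0 by simp
      ultimately have "v' \<in> N'" unfolding N'_def by auto
      then obtain r' where r': "\<forall>f. r' f \<in> R" "v' = (\<lambda>j. \<Sum>f\<in>F'. r' f * f j)" using F'(3) by blast
      have vz: "v = (\<lambda>j. z j + v' j)" unfolding v'_def by auto
      define r0 where "r0 = (\<lambda>f. if f \<in> F0 then r f else 0)"
      have zz: "z = (\<lambda>j. \<Sum>f\<in>F0. r0 f * w f j)" unfolding z_def r0_def by auto
      define ra where "ra = (\<lambda>g. \<Sum>f\<in>{f\<in>F0. w f = g}. r0 f)"
      have z2: "z = (\<lambda>j. \<Sum>g\<in>w ` F0. ra g * g j)" unfolding zz ra_def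
        by (rule comb_image[OF F0(1)])
      define rr where "rr = (\<lambda>f. (if f \<in> w ` F0 then ra f else 0) + (if f \<in> F' then r' f else 0))"
      have "v j = (\<Sum>f\<in>F. rr f * f j)" for j
      proof -
        have "v j = z j + v' j" using vz by (rule fun_cong)
        also have "\<dots> = (\<Sum>g\<in>w ` F0. ra g * g j) + (\<Sum>f\<in>F'. r' f * f j)"
          using z2 r'(2) by simp
        also have "\<dots> = (\<Sum>f\<in>F. rr f * f j)" unfolding F_def rr_def
          by (rule comb_union) (use F0(1) F'(1) in auto)
        finally show ?thesis .
      qed
      then have "v = (\<lambda>j. \<Sum>f\<in>F. rr f * f j)" by (rule ext)
      moreover have "\<forall>f. rr f \<in> R" unfolding rr_def ra_def r0_def using r(1) r'(1) by (auto intro!: Radd Rsum)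
      ultimately show "\<exists>r. (\<forall>f. r f \<in> R) \<and> v = (\<lambda>j. \<Sum>f\<in>F. r f * f j)" by blast
    qed
  qed
qed

end

locale pbw_syz = pbw R n x for R :: "'a::ring_1 set" and n x +
  fixes m t :: nat and c :: "nat \<Rightarrow> 'a" and alpha :: "nat \<Rightarrow> nat \<Rightarrow> nat" and idx :: "nat \<Rightarrow> nat"
  assumes noeth: "left_noetherian R" and cR: "\<forall>j<t. c j \<in> R - {0}"
    and aE: "\<forall>j<t. alpha j \<in> Exps n" and iM: "\<forall>j<t. idx j < m"
begin

abbreviation Sy where "Sy \<equiv> Syz x n t c alpha idx"
abbreviation LC where "LC \<equiv> lin_comb x n t c alpha idx"
definition Hom where "Hom \<beta> k = {h \<in> Sy. homogeneous_of_degree R x n t alpha idx \<beta> k h}"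

lemma lc_add: "LC (\<lambda>j. h1 j + h2 j) = (\<lambda>k. LC h1 k + LC h2 k)"
  unfolding lin_comb_def by (simp add: distrib_right sum.distrib)
lemma lc_scale: "LC (\<lambda>j. a * h j) = (\<lambda>k. a * LC h k)"
  unfolding lin_comb_def by (simp add: sum_distrib_left mult.assoc)
lemma Sy_iff: "h \<in> Sy \<longleftrightarrow> (\<forall>j\<ge>t. h j = 0) \<and> LC h = (\<lambda>k. 0)"
  unfolding Syz_def by simp
lemma Sy_zero: "(\<lambda>_. 0) \<in> Sy" unfolding Sy_iff lin_comb_def by simp
lemma Sy_add: "h1 \<in> Sy \<Longrightarrow> h2 \<in> Sy \<Longrightarrow> (\<lambda>j. h1 j + h2 j) \<in> Sy"
  unfolding Sy_iff lc_add by simp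
lemma Sy_scale: "h \<in> Sy \<Longrightarrow> (\<lambda>j. a * h j) \<in> Sy"
  unfolding Sy_iff lc_scale by simp

lemma exps_diff: "\<beta> \<in> Exps n \<Longrightarrow> (\<lambda>i. \<beta> i - a i) \<in> Exps n" unfolding Exps_def by auto

lemma hom_term: assumes "h \<in> Hom \<beta> k" "j < t" "h j \<noteq> 0"
  shows "\<exists>r\<in>R. \<exists>\<gamma>\<in>Exps n. h j = r * M \<gamma> \<and> r \<noteq> 0 \<and> idx j = k \<and> (\<lambda>i. \<gamma> i + alpha j i) = \<beta>"
  using assms unfolding Hom_def homogeneous_of_degree_def by blast

lemma fg_hom: assumes \<beta>: "\<beta> \<in> Exps n" and k: "k < m"
  shows "\<exists>G. finite G \<and> G \<subseteq> Sy \<and> (\<forall>g\<in>G. homogeneous_syz R x n m t alpha idx g) \<and>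
     (\<forall>h\<in>Hom \<beta> k. \<exists>r. (\<forall>g. r g \<in> R) \<and> h = (\<lambda>j. \<Sum>g\<in>G. r g * g j))"
proof -
  define J where "J = {j. j < t \<and> idx j = k \<and> (\<forall>i. alpha j i \<le> \<beta> i)}"
  define gm where "gm = (\<lambda>j i. \<beta> i - alpha j i)"
  define emb where "emb = (\<lambda>(v::nat \<Rightarrow> 'a) j. v j * M (gm j))"
  define N where "N = {v. (\<forall>j. v j \<in> R \<and> (j \<notin> J \<longrightarrow> v j = 0)) \<and> emb v \<in> Sy}"
  have finJ: "finite J" unfolding J_def by auto
  have gmE: "gm j \<in> Exps n" for j unfolding gm_def using exps_diff[OF \<beta>] .
  have N0: "(\<lambda>_. 0) \<in> N" unfolding N_def emb_def using Sy_zero by simp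
  have Nadd: "\<forall>v\<in>N. \<forall>w\<in>N. (\<lambda>j. v j + w j) \<in> N"
  proof (intro ballI)
    fix v w assume vw: "v \<in> N" "w \<in> N"
    have "emb (\<lambda>j. v j + w j) = (\<lambda>j. emb v j + emb w j)" unfolding emb_def by (simp add: distrib_right)
    then show "(\<lambda>j. v j + w j) \<in> N" using vw Sy_add unfolding N_def by auto
  qed
  have Nsc: "\<forall>r\<in>R. \<forall>v\<in>N. (\<lambda>j. r * v j) \<in> N"
  proof (intro ballI)
    fix r v assume rv: "r \<in> R" "v \<in> N"
    have "emb (\<lambda>j. r * v j) = (\<lambda>j. r * emb v j)" unfolding emb_def by (simp add: mult.assoc)
    then show "(\<lambda>j. r * v j) \<in> N" using rv Sy_scale unfolding N_def by auto
  qed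
  have "(\<forall>v\<in>N. \<forall>j. v j \<in> R \<and> (j \<notin> J \<longrightarrow> v j = 0))" unfolding N_def by blast
  then obtain F where F: "finite F" "F \<subseteq> N" "\<forall>v\<in>N. \<exists>r. (\<forall>f. r f \<in> R) \<and> v = (\<lambda>j. \<Sum>f\<in>F. r f * f j)"
    using noeth_mod[OF noeth finJ, rule_format, of N] N0 Nadd Nsc by blast
  show ?thesis
  proof (intro exI[of _ "emb ` F"] conjI ballI)
    show "finite (emb ` F)" using F(1) by simp
    show "emb ` F \<subseteq> Sy" using F(2) unfolding N_def by auto
  next
    fix g assume "g \<in> emb ` F"
    then obtain f where f: "f \<in> F" "g = emb f" by auto
    have fN: "f \<in> N" using f F(2) by auto
    have "homogeneous_of_degree R x n t alpha idx \<beta> k g"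
      unfolding homogeneous_of_degree_def
    proof (intro allI impI conjI)
      fix j assume j: "j < t"
      have fR: "f j \<in> R" using fN unfolding N_def by auto
      show "\<exists>r\<in>R. \<exists>\<gamma>\<in>Exps n. g j = r * M \<gamma>" using fR gmE unfolding f(2) emb_def by auto
      show "g j = 0 \<or> (\<exists>r\<in>R. \<exists>\<gamma>\<in>Exps n. g j = r * M \<gamma> \<and> r \<noteq> 0 \<and> idx j = k \<and> (\<lambda>i. \<gamma> i + alpha j i) = \<beta>)"
      proof (cases "f j = 0")
        case True then show ?thesis unfolding f(2) emb_def by simp
      next
        case False
        then have "j \<in> J" using fN unfolding N_def by auto
        then have jj: "idx j = k" "\<forall>i. alpha j i \<le> \<beta> i" unfolding J_def by auto
        have "(\<lambda>i. gm j i + alpha j i) = \<beta>" unfolding gm_def using jj(2) by (auto simp: fun_eq_iff)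
        then show ?thesis using False fR gmE jj(1) unfolding f(2) emb_def by blast
      qed
    qed
    then show "homogeneous_syz R x n m t alpha idx g" unfolding homogeneous_syz_def using \<beta> k by blast
  next
    fix h assume h: "h \<in> Hom \<beta> k"
    have hSy: "h \<in> Sy" using h unfolding Hom_def by auto
    define P where "P = (\<lambda>j r. r \<in> R \<and> r \<noteq> 0 \<and> (\<exists>\<gamma>\<in>Exps n. h j = r * M \<gamma> \<and> idx j = k \<and> (\<lambda>i. \<gamma> i + alpha j i) = \<beta>))"
    define v where "v = (\<lambda>j. if j < t \<and> h j \<noteq> 0 then (SOME r. P j r) else 0)"
    have vj: "v j \<in> R \<and> (j \<notin> J \<longrightarrow> v j = 0) \<and> h j = v j * M (gm j)" for j
    proof (cases "j < t \<and> h j \<noteq> 0")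
      case True
      then have "\<exists>r. P j r" using hom_term[OF h] unfolding P_def by blast
      then have Pv: "P j (v j)" unfolding v_def using True by (simp add: someI_ex)
      then obtain \<gamma> where g: "v j \<in> R" "\<gamma> \<in> Exps n" "h j = v j * M \<gamma>" "idx j = k" "(\<lambda>i. \<gamma> i + alpha j i) = \<beta>"
        unfolding P_def by blast
      have eq: "\<gamma> i + alpha j i = \<beta> i" for i using g(5) by metis
      have "\<gamma> = gm j" unfolding gm_def by (rule ext) (metis eq diff_add_inverse2)
      moreover have "\<forall>i. alpha j i \<le> \<beta> i" by (metis eq le_add2)
      ultimately show ?thesis using g True unfolding J_def by auto
    next
      case False
      then have "h j = 0" using hSy unfolding Sy_iff by (meson not_le)
      then show ?thesis using False unfolding v_def by auto
    qed
    have he: "h = emb v" unfolding emb_def using vj by (auto simp: fun_eq_iff)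
    have "v \<in> N" unfolding N_def using vj he hSy by auto
    then obtain r where r: "\<forall>f. r f \<in> R" "v = (\<lambda>j. \<Sum>f\<in>F. r f * f j)" using F(3) by blast
    have "h = (\<lambda>j. \<Sum>f\<in>F. r f * emb f j)" unfolding he emb_def r(2)
      by (simp add: sum_distrib_right mult.assoc)
    also have "\<dots> = (\<lambda>j. \<Sum>g\<in>emb ` F. (\<Sum>f\<in>{f\<in>F. emb f = g}. r f) * g j)" by (rule comb_image[OF F(1)])
    finally show "\<exists>r. (\<forall>g. r g \<in> R) \<and> h = (\<lambda>j. \<Sum>g\<in>emb ` F. r g * g j)"
      using r(1) by (intro exI[of _ "\<lambda>g. \<Sum>f\<in>{f\<in>F. emb f = g}. r f"]) (auto intro: Rsum)
  qed
qed


definition bmax where "bmax J = (\<lambda>i. if J = {} then 0 else Max ((\<lambda>j. alpha j i) ` J))"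
definition Jb where "Jb \<beta> k = {j. j < t \<and> idx j = k \<and> (\<forall>i. alpha j i \<le> \<beta> i)}"

lemma bmax_E: assumes "J \<subseteq> {..<t}" shows "bmax J \<in> Exps n"
  unfolding Exps_def
proof (intro CollectI allI impI)
  fix i assume i: "n \<le> i"
  show "bmax J i = 0"
  proof (cases "J = {}")
    case False
    obtain j0 where j0: "j0 \<in> J" using False by blast
    have z: "\<forall>j\<in>J. alpha j i = 0" using assms aE i unfolding Exps_def by auto
    have "(\<lambda>j. alpha j i) ` J = {0}" using z j0 by force
    then show ?thesis unfolding bmax_def using False by simp
  qed (simp add: bmax_def)
qed

lemma bmax_ge: "finite J \<Longrightarrow> j \<in> J \<Longrightarrow> alpha j i \<le> bmax J i"
  unfolding bmax_def by auto

lemma bmax_le: "finite J \<Longrightarrow> (\<forall>j\<in>J. alpha j i \<le> \<beta> i) \<Longrightarrow> bmax J i \<le> \<beta> i"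
  unfolding bmax_def by auto

definition mu where "mu \<gamma> j = (SOME \<mu>. \<mu> \<in> R \<and> M \<gamma> * c j * M (alpha j) = \<mu> * M (addE \<gamma> (alpha j)))"

lemma mu: assumes "j < t" shows "mu \<gamma> j \<in> R" "M \<gamma> * c j * M (alpha j) = mu \<gamma> j * M (addE \<gamma> (alpha j))"
proof -
  have "\<exists>\<mu>. \<mu> \<in> R \<and> M \<gamma> * c j * M (alpha j) = \<mu> * M (addE \<gamma> (alpha j))"
    using P1[of "c j" "alpha j" \<gamma>] cR aE assms by auto
  then have "mu \<gamma> j \<in> R \<and> M \<gamma> * c j * M (alpha j) = mu \<gamma> j * M (addE \<gamma> (alpha j))"
    unfolding mu_def by (rule someI_ex)
  then show "mu \<gamma> j \<in> R" "M \<gamma> * c j * M (alpha j) = mu \<gamma> j * M (addE \<gamma> (alpha j))" by auto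
qed

lemma lift: assumes \<beta>: "\<beta> \<in> Exps n" and h: "h \<in> Hom \<beta> k"
  shows "\<exists>h'. h' \<in> Hom (bmax (Jb \<beta> k)) k \<and> h = (\<lambda>j. M (\<lambda>i. \<beta> i - bmax (Jb \<beta> k) i) * h' j)"
proof -
  define J where "J = Jb \<beta> k"
  define \<beta>' where "\<beta>' = bmax J"
  define \<delta> where "\<delta> = (\<lambda>i. \<beta> i - \<beta>' i)"
  define gm where "gm = (\<lambda>j i. \<beta>' i - alpha j i)"
  have finJ: "finite J" unfolding J_def Jb_def by auto
  have JJ: "J \<subseteq> {..<t}" unfolding J_def Jb_def by auto
  have \<beta>'E: "\<beta>' \<in> Exps n" unfolding \<beta>'_def using bmax_E[OF JJ] .
  have \<delta>E: "\<delta> \<in> Exps n" unfolding \<delta>_def using exps_diff[OF \<beta>] .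
  have gmE: "gm j \<in> Exps n" for j unfolding gm_def using exps_diff[OF \<beta>'E] .
  have hSy: "h \<in> Sy" using h unfolding Hom_def by auto
  have ale: "alpha j i \<le> \<beta>' i" if "j \<in> J" for j i unfolding \<beta>'_def using bmax_ge[OF finJ that] .
  have ble: "\<beta>' i \<le> \<beta> i" for i unfolding \<beta>'_def
    by (rule bmax_le[OF finJ]) (auto simp: J_def Jb_def)
  define s where "s = (\<lambda>j. SOME r. r \<in> R \<and> M \<delta> * r * M (gm j) = h j)"
  define h' where "h' = (\<lambda>j. if j < t \<and> h j \<noteq> 0 then s j * M (gm j) else 0)"
  have key: "j \<in> J \<and> s j \<in> R \<and> M \<delta> * s j * M (gm j) = h j" if j: "j < t" "h j \<noteq> 0" for j
  proof -
    obtain r \<gamma> where rg: "r \<in> R" "\<gamma> \<in> Exps n" "h j = r * M \<gamma>" "r \<noteq> 0" "idx j = k" "(\<lambda>i. \<gamma> i + alpha j i) = \<beta>"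
      using hom_term[OF h j] by blast
    have eq: "\<gamma> i + alpha j i = \<beta> i" for i using rg(6) by metis
    have "\<forall>i. alpha j i \<le> \<beta> i" using eq le_add2 by metis
    then have jJ: "j \<in> J" unfolding J_def Jb_def using j rg(5) by simp
    have "addE \<delta> (gm j) = \<gamma>" unfolding addE_def \<delta>_def gm_def
    proof (rule ext)
      fix i show "\<beta> i - \<beta>' i + (\<beta>' i - alpha j i) = \<gamma> i" using eq[of i] ale[OF jJ, of i] ble[of i] by arith
    qed
    then obtain r' where "r' \<in> R" "M \<delta> * r' * M (gm j) = h j" using P2[OF rg(1) gmE, of \<delta>] rg(3) by auto
    then have "\<exists>r. r \<in> R \<and> M \<delta> * r * M (gm j) = h j" by blast
    then have "s j \<in> R \<and> M \<delta> * s j * M (gm j) = h j" unfolding s_def by (rule someI_ex)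
    then show ?thesis using jJ by blast
  qed
  have hh: "h j = M \<delta> * h' j" for j
  proof (cases "j < t \<and> h j \<noteq> 0")
    case True then show ?thesis using key[of j] unfolding h'_def by (simp add: mult.assoc)
  next
    case False
    then have "h j = 0" using hSy unfolding Sy_iff by (meson not_le)
    then show ?thesis using False unfolding h'_def by simp
  qed
  have hom': "homogeneous_of_degree R x n t alpha idx \<beta>' k h'"
    unfolding homogeneous_of_degree_def
  proof (intro allI impI)
    fix j assume j: "j < t"
    show "(\<exists>r\<in>R. \<exists>\<gamma>\<in>Exps n. h' j = r * M \<gamma>) \<and>
          (h' j = 0 \<or> (\<exists>r\<in>R. \<exists>\<gamma>\<in>Exps n. h' j = r * M \<gamma> \<and> r \<noteq> 0 \<and> idx j = k \<and> (\<lambda>i. \<gamma> i + alpha j i) = \<beta>'))"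
    proof (cases "h j \<noteq> 0")
      case True
      have k1: "j \<in> J" "s j \<in> R" "M \<delta> * s j * M (gm j) = h j" using key[OF j True] by auto
      have sn: "s j \<noteq> 0" using k1(3) True by auto
      have ik: "idx j = k" using k1(1) unfolding J_def Jb_def by auto
      have "(\<lambda>i. gm j i + alpha j i) = \<beta>'" unfolding gm_def using ale[OF k1(1)] by (auto simp: fun_eq_iff)
      then show ?thesis using k1 sn ik gmE j True unfolding h'_def by auto
    next
      case False
      then show ?thesis unfolding h'_def by (intro conjI disjI1 bexI[of _ 0] bexI[of _ "\<lambda>_. 0"]) auto
    qed
  qed
  have LC0: "LC h' kk = 0" for kk
  proof -
    define \<rho> where "\<rho> = (\<lambda>j. if j < t \<and> h j \<noteq> 0 \<and> idx j = kk then s j * mu (gm j) j else 0)"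
    have \<rho>R: "\<rho> j \<in> R" if "j < t" for j
      unfolding \<rho>_def using key[of j] mu(1)[OF that] that by auto
    have T: "h' j * (c j * (if idx j = kk then M (alpha j) else 0)) = \<rho> j * M \<beta>'" if j: "j < t" for j
    proof (cases "h j \<noteq> 0 \<and> idx j = kk")
      case True
      have k1: "j \<in> J" using key[OF j] True by auto
      have ad: "addE (gm j) (alpha j) = \<beta>'" unfolding addE_def gm_def using ale[OF k1] by (auto simp: fun_eq_iff)
      have "h' j * (c j * M (alpha j)) = s j * (M (gm j) * c j * M (alpha j))"
        unfolding h'_def using j True by (simp add: mult.assoc)
      also have "\<dots> = s j * mu (gm j) j * M \<beta>'" using mu(2)[OF j, of "gm j"] ad by (simp add: mult.assoc)
      finally show ?thesis using True j unfolding \<rho>_def by simp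
    next
      case False
      then show ?thesis unfolding \<rho>_def h'_def by auto
    qed
    have "LC h' kk = (\<Sum>j<t. \<rho> j * M \<beta>')" unfolding lin_comb_def using T by (intro sum.cong) auto
    also have "\<dots> = (\<Sum>j<t. \<rho> j) * M \<beta>'" by (simp add: sum_distrib_right)
    finally have L: "LC h' kk = (\<Sum>j<t. \<rho> j) * M \<beta>'" .
    have "h = (\<lambda>j. M \<delta> * h' j)" using hh by (rule ext)
    then have "LC h = (\<lambda>k. M \<delta> * LC h' k)" using lc_scale by simp
    then have "M \<delta> * LC h' kk = 0" using hSy unfolding Sy_iff by (metis)
    then have "M \<delta> * (\<Sum>j<t. \<rho> j) * M \<beta>' = 0" using L by (simp add: mult.assoc)
    then have "(\<Sum>j<t. \<rho> j) = 0" using cancel \<delta>E \<beta>'E \<rho>R by (meson Rsum lessThan_iff)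
    then show ?thesis using L by simp
  qed
  have "h' \<in> Sy" unfolding Sy_iff using LC0 by (auto simp: h'_def fun_eq_iff)
  then have "h' \<in> Hom \<beta>' k" unfolding Hom_def using hom' by auto
  moreover have "h = (\<lambda>j. M \<delta> * h' j)" using hh by (rule ext)
  ultimately show ?thesis unfolding \<beta>'_def \<delta>_def J_def by blast
qed


definition rep where "rep a = (SOME c. (\<forall>\<alpha>. c \<alpha> \<in> R) \<and> finite {\<alpha>. c \<alpha> \<noteq> 0} \<and> {\<alpha>. c \<alpha> \<noteq> 0} \<subseteq> Exps n \<and>
            a = (\<Sum>\<alpha>\<in>{\<alpha>. c \<alpha> \<noteq> 0}. c \<alpha> * M \<alpha>))"

lemma rep: "(\<forall>\<alpha>. rep a \<alpha> \<in> R) \<and> finite {\<alpha>. rep a \<alpha> \<noteq> 0} \<and> {\<alpha>. rep a \<alpha> \<noteq> 0} \<subseteq> Exps n \<and>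
            a = (\<Sum>\<alpha>\<in>{\<alpha>. rep a \<alpha> \<noteq> 0}. rep a \<alpha> * M \<alpha>)"
  unfolding rep_def by (rule someI_ex[OF span])

lemma lc_T: "LC g k = (\<Sum>j\<in>{j. j < t \<and> idx j = k}. g j * (c j * M (alpha j)))"
proof -
  have "{j. j < t \<and> idx j = k} = {j\<in>{..<t}. idx j = k}" by auto
  moreover have "(\<Sum>j\<in>{j\<in>{..<t}. idx j = k}. g j * (c j * M (alpha j))) =
      (\<Sum>j<t. if idx j = k then g j * (c j * M (alpha j)) else 0)"
    by (rule sum.inter_filter) simp
  ultimately have "(\<Sum>j\<in>{j. j < t \<and> idx j = k}. g j * (c j * M (alpha j))) =
      (\<Sum>j<t. if idx j = k then g j * (c j * M (alpha j)) else 0)" by simp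
  also have "\<dots> = LC g k" unfolding lin_comb_def by (intro sum.cong) auto
  finally show ?thesis by simp
qed

lemma stepL: assumes "j < t"
  shows "(\<Sum>\<gamma>\<in>\<Gamma>. r \<gamma> * M \<gamma>) * (c j * M (alpha j)) = (\<Sum>\<gamma>\<in>\<Gamma>. r \<gamma> * mu \<gamma> j * M (addE \<gamma> (alpha j)))"
proof -
  have m2: "M \<gamma> * (c j * M (alpha j)) = mu \<gamma> j * M (addE \<gamma> (alpha j))" for \<gamma>
    using mu(2)[OF assms, of \<gamma>] by (simp add: mult.assoc)
  show ?thesis unfolding sum_distrib_right
    by (intro sum.cong refl) (simp add: mult.assoc m2)
qed

lemma decomp: assumes h: "h \<in> Sy"
  shows "\<exists>P hp. finite P \<and> (\<forall>p\<in>P. fst p \<in> Exps n \<and> snd p < m \<and> hp p \<in> Hom (fst p) (snd p)) \<and>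
      h = (\<lambda>j. \<Sum>p\<in>P. hp p j)"
proof -
  define rh where "rh j = rep (h j)" for j
  define sp where "sp j = {\<gamma>. rh j \<gamma> \<noteq> 0}" for j
  have spF: "finite (sp j)" and spE: "sp j \<subseteq> Exps n" and rhR: "rh j \<gamma> \<in> R"
    and hrep: "h j = (\<Sum>\<gamma>\<in>sp j. rh j \<gamma> * M \<gamma>)" for j \<gamma>
    using rep[of "h j"] unfolding rh_def sp_def by auto
  define fa where "fa j \<gamma> = addE \<gamma> (alpha j)" for j \<gamma>
  define B where "B = (\<Union>j<t. fa j ` sp j)"
  have BF: "finite B" unfolding B_def using spF by auto
  have BE: "B \<subseteq> Exps n" unfolding B_def fa_def using spE aE exps_add by blast
  define Q where "Q j \<beta> = {\<gamma>\<in>sp j. fa j \<gamma> = \<beta>}" for j \<beta>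
  have QF: "finite (Q j \<beta>)" for j \<beta> unfolding Q_def using spF by auto
  define hp where "hp p = (\<lambda>j. if j < t \<and> idx j = snd p then \<Sum>\<gamma>\<in>Q j (fst p). rh j \<gamma> * M \<gamma> else 0)" for p
  define P where "P = B \<times> {..<m}"
  have hS: "\<forall>j\<ge>t. h j = 0" using h unfolding Sy_iff by auto
  have recon: "h j = (\<Sum>p\<in>P. hp p j)" for j
  proof (cases "j < t")
    case True
    have "(\<Sum>p\<in>P. hp p j) = (\<Sum>\<beta>\<in>B. \<Sum>k<m. hp (\<beta>, k) j)"
      unfolding P_def by (simp add: sum.cartesian_product)
    also have "\<dots> = (\<Sum>\<beta>\<in>B. \<Sum>\<gamma>\<in>Q j \<beta>. rh j \<gamma> * M \<gamma>)"
    proof (rule sum.cong[OF refl])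
      fix \<beta>
      have "(\<Sum>k<m. hp (\<beta>, k) j) = (\<Sum>k<m. if idx j = k then (\<Sum>\<gamma>\<in>Q j \<beta>. rh j \<gamma> * M \<gamma>) else 0)"
        unfolding hp_def using True by (intro sum.cong) auto
      also have "\<dots> = (\<Sum>\<gamma>\<in>Q j \<beta>. rh j \<gamma> * M \<gamma>)" using iM True by (simp add: sum.delta')
      finally show "(\<Sum>k<m. hp (\<beta>, k) j) = (\<Sum>\<gamma>\<in>Q j \<beta>. rh j \<gamma> * M \<gamma>)" .
    qed
    also have "\<dots> = (\<Sum>\<gamma>\<in>sp j. rh j \<gamma> * M \<gamma>)" unfolding Q_def
      by (rule sum.group[OF spF BF]) (use True in \<open>auto simp: B_def\<close>)
    finally show ?thesis using hrep by simp
  next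
    case False
    then show ?thesis using hS unfolding hp_def by simp
  qed
  define T where "T k = {j. j < t \<and> idx j = k}" for k
  have TF: "finite (T k)" for k unfolding T_def by auto
  define E where "E k \<beta> = (\<Sum>j\<in>T k. \<Sum>\<gamma>\<in>Q j \<beta>. rh j \<gamma> * mu \<gamma> j)" for k \<beta>
  have ER: "E k \<beta> \<in> R" for k \<beta> unfolding E_def T_def using rhR mu(1) by (auto intro!: Rsum Rmult)
  have inQ: "fa j \<gamma> = \<beta>" if "\<gamma> \<in> Q j \<beta>" for j \<gamma> \<beta> using that unfolding Q_def by auto
  have LCa: "LC h k = (\<Sum>\<beta>\<in>B. E k \<beta> * M \<beta>)" for k
  proof -
    have "LC h k = (\<Sum>j\<in>T k. h j * (c j * M (alpha j)))" unfolding T_def by (rule lc_T)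
    also have "\<dots> = (\<Sum>j\<in>T k. \<Sum>\<gamma>\<in>sp j. rh j \<gamma> * mu \<gamma> j * M (fa j \<gamma>))"
      unfolding fa_def by (intro sum.cong refl) (auto simp: T_def hrep stepL)
    also have "\<dots> = (\<Sum>j\<in>T k. \<Sum>\<beta>\<in>B. \<Sum>\<gamma>\<in>Q j \<beta>. rh j \<gamma> * mu \<gamma> j * M (fa j \<gamma>))"
    proof (rule sum.cong[OF refl])
      fix j assume "j \<in> T k"
      then have jt: "j < t" unfolding T_def by auto
      show "(\<Sum>\<gamma>\<in>sp j. rh j \<gamma> * mu \<gamma> j * M (fa j \<gamma>)) = (\<Sum>\<beta>\<in>B. \<Sum>\<gamma>\<in>Q j \<beta>. rh j \<gamma> * mu \<gamma> j * M (fa j \<gamma>))"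
        unfolding Q_def by (rule sum.group[OF spF BF, symmetric]) (use jt in \<open>auto simp: B_def\<close>)
    qed
    also have "\<dots> = (\<Sum>j\<in>T k. \<Sum>\<beta>\<in>B. (\<Sum>\<gamma>\<in>Q j \<beta>. rh j \<gamma> * mu \<gamma> j) * M \<beta>)"
      by (intro sum.cong refl) (auto simp: sum_distrib_right inQ)
    also have "\<dots> = (\<Sum>\<beta>\<in>B. \<Sum>j\<in>T k. (\<Sum>\<gamma>\<in>Q j \<beta>. rh j \<gamma> * mu \<gamma> j) * M \<beta>)" by (rule sum.swap)
    also have "\<dots> = (\<Sum>\<beta>\<in>B. E k \<beta> * M \<beta>)" unfolding E_def by (simp add: sum_distrib_right)
    finally show ?thesis .
  qed
  have E0: "E k \<beta> = 0" if "\<beta> \<in> B" for k \<beta>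
  proof -
    have "(\<Sum>\<beta>\<in>B. E k \<beta> * M \<beta>) = 0" using LCa[of k] h unfolding Sy_iff by (metis)
    then show ?thesis using indep[OF BF BE, of "E k"] ER that by blast
  qed
  have hpP: "hp p \<in> Hom (fst p) (snd p)" if p: "p \<in> P" for p
  proof -
    obtain \<beta> k where pe: "p = (\<beta>, k)" "\<beta> \<in> B" "k < m" using p unfolding P_def by auto
    have Qs: "Q j \<beta> = {} \<or> (\<exists>\<gamma>0. Q j \<beta> = {\<gamma>0})" for j
    proof -
      have "\<gamma>1 = \<gamma>2" if "\<gamma>1 \<in> Q j \<beta>" "\<gamma>2 \<in> Q j \<beta>" for \<gamma>1 \<gamma>2
      proof
        fix i
        have "\<gamma>1 i + alpha j i = \<gamma>2 i + alpha j i" using inQ[OF that(1)] inQ[OF that(2)]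
          unfolding fa_def addE_def by metis
        then show "\<gamma>1 i = \<gamma>2 i" by simp
      qed
      then show ?thesis by blast
    qed
    have homp: "homogeneous_of_degree R x n t alpha idx \<beta> k (hp p)"
      unfolding homogeneous_of_degree_def
    proof (intro allI impI)
      fix j assume j: "j < t"
      show "(\<exists>r\<in>R. \<exists>\<gamma>\<in>Exps n. hp p j = r * M \<gamma>) \<and>
          (hp p j = 0 \<or> (\<exists>r\<in>R. \<exists>\<gamma>\<in>Exps n. hp p j = r * M \<gamma> \<and> r \<noteq> 0 \<and> idx j = k \<and> (\<lambda>i. \<gamma> i + alpha j i) = \<beta>))"
      proof (cases "idx j = k \<and> Q j \<beta> \<noteq> {}")
        case True
        then obtain \<gamma>0 where g0: "Q j \<beta> = {\<gamma>0}" using Qs by blast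
        then have g0': "\<gamma>0 \<in> sp j" "fa j \<gamma>0 = \<beta>" unfolding Q_def by auto
        have "hp p j = rh j \<gamma>0 * M \<gamma>0" unfolding hp_def pe using j True g0 by simp
        moreover have "rh j \<gamma>0 \<noteq> 0" using g0'(1) unfolding sp_def by auto
        moreover have "\<gamma>0 \<in> Exps n" using g0'(1) spE by auto
        moreover have "(\<lambda>i. \<gamma>0 i + alpha j i) = \<beta>" using g0'(2) unfolding fa_def addE_def .
        ultimately show ?thesis using rhR True by blast
      next
        case False
        then have "hp p j = 0" unfolding hp_def pe by auto
        then show ?thesis by (intro conjI disjI1 bexI[of _ 0] bexI[of _ "\<lambda>_. 0"]) auto
      qed
    qed
    have LCp: "LC (hp p) k' = 0" for k'
    proof (cases "k' = k")
      case True
      have "LC (hp p) k = (\<Sum>j\<in>T k. hp p j * (c j * M (alpha j)))" unfolding T_def by (rule lc_T)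
      also have "\<dots> = (\<Sum>j\<in>T k. \<Sum>\<gamma>\<in>Q j \<beta>. rh j \<gamma> * mu \<gamma> j * M (fa j \<gamma>))"
        unfolding fa_def by (intro sum.cong refl) (auto simp: T_def hp_def pe stepL)
      also have "\<dots> = (\<Sum>j\<in>T k. (\<Sum>\<gamma>\<in>Q j \<beta>. rh j \<gamma> * mu \<gamma> j) * M \<beta>)"
        by (intro sum.cong refl) (auto simp: sum_distrib_right inQ)
      also have "\<dots> = E k \<beta> * M \<beta>" unfolding E_def by (simp add: sum_distrib_right)
      finally show ?thesis using True E0[OF pe(2)] by simp
    next
      case False
      have "LC (hp p) k' = (\<Sum>j\<in>T k'. hp p j * (c j * M (alpha j)))" unfolding T_def by (rule lc_T)
      also have "\<dots> = 0" using False by (intro sum.neutral) (auto simp: T_def hp_def pe)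
      finally show ?thesis .
    qed
    have "hp p \<in> Sy" unfolding Sy_iff using LCp by (auto simp: hp_def fun_eq_iff)
    then show ?thesis unfolding Hom_def using homp pe by auto
  qed
  show ?thesis
  proof (intro exI[of _ P] exI[of _ hp] conjI ballI)
    show "finite P" unfolding P_def using BF by auto
  next
    fix p assume p: "p \<in> P"
    then show "fst p \<in> Exps n" using BE unfolding P_def by auto
    show "snd p < m" using p unfolding P_def by auto
    show "hp p \<in> Hom (fst p) (snd p)" using hpP[OF p] .
  next
    show "h = (\<lambda>j. \<Sum>p\<in>P. hp p j)" using recon by (rule ext)
  qed
qed


definition GS where "GS \<beta> k = (SOME G. finite G \<and> G \<subseteq> Sy \<and> (\<forall>g\<in>G. homogeneous_syz R x n m t alpha idx g) \<and>
     (\<forall>h\<in>Hom \<beta> k. \<exists>r. (\<forall>g. r g \<in> R) \<and> h = (\<lambda>j. \<Sum>g\<in>G. r g * g j)))"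

lemma GS: assumes "\<beta> \<in> Exps n" "k < m"
  shows "finite (GS \<beta> k) \<and> GS \<beta> k \<subseteq> Sy \<and> (\<forall>g\<in>GS \<beta> k. homogeneous_syz R x n m t alpha idx g) \<and>
     (\<forall>h\<in>Hom \<beta> k. \<exists>r. (\<forall>g. r g \<in> R) \<and> h = (\<lambda>j. \<Sum>g\<in>GS \<beta> k. r g * g j))"
  unfolding GS_def by (rule someI_ex[OF fg_hom[OF assms]])

definition SS where "SS = (\<Union>p\<in>(bmax ` Pow {..<t}) \<times> {..<m}. GS (fst p) (snd p))"

lemma SS_fin: "finite SS"
proof -
  have "\<forall>p\<in>(bmax ` Pow {..<t}) \<times> {..<m}. finite (GS (fst p) (snd p))"
    using GS bmax_E by auto
  then show ?thesis unfolding SS_def by auto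
qed

lemma SS_mem: assumes "s \<in> SS" shows "s \<in> Sy \<and> homogeneous_syz R x n m t alpha idx s"
proof -
  obtain p where p: "p \<in> (bmax ` Pow {..<t}) \<times> {..<m}" "s \<in> GS (fst p) (snd p)"
    using assms unfolding SS_def by blast
  obtain J where J: "J \<in> Pow {..<t}" "fst p = bmax J" using p(1) by auto
  have "fst p \<in> Exps n" using J bmax_E by auto
  moreover have "snd p < m" using p(1) by auto
  ultimately show ?thesis using GS[of "fst p" "snd p"] p(2) by blast
qed

lemma SS_sub: "SS \<subseteq> Sy" and SS_hom: "\<forall>s\<in>SS. homogeneous_syz R x n m t alpha idx s"
  using SS_mem by auto

lemma Hom_comb: assumes \<beta>: "\<beta> \<in> Exps n" and k: "k < m" and h: "h \<in> Hom \<beta> k"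
  shows "\<exists>a. h = (\<lambda>j. \<Sum>s\<in>SS. a s * s j)"
proof -
  define \<beta>' where "\<beta>' = bmax (Jb \<beta> k)"
  define \<delta> where "\<delta> = (\<lambda>i. \<beta> i - \<beta>' i)"
  obtain h' where h': "h' \<in> Hom \<beta>' k" "h = (\<lambda>j. M \<delta> * h' j)"
    using lift[OF \<beta> h] unfolding \<beta>'_def \<delta>_def by blast
  have JP: "Jb \<beta> k \<in> Pow {..<t}" unfolding Jb_def by auto
  have \<beta>'E: "\<beta>' \<in> Exps n" unfolding \<beta>'_def using bmax_E JP by auto
  have bp: "(\<beta>', k) \<in> (bmax ` Pow {..<t}) \<times> {..<m}" unfolding \<beta>'_def using JP k by blast
  have sub: "GS \<beta>' k \<subseteq> SS" unfolding SS_def using UN_upper[OF bp, of "\<lambda>p. GS (fst p) (snd p)"] by simp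
  have "\<forall>h\<in>Hom \<beta>' k. \<exists>r. (\<forall>g. r g \<in> R) \<and> h = (\<lambda>j. \<Sum>g\<in>GS \<beta>' k. r g * g j)"
    using GS[OF \<beta>'E k] by (elim conjE)
  then obtain r where r: "h' = (\<lambda>j. \<Sum>g\<in>GS \<beta>' k. r g * g j)" using h'(1) by blast
  have "h j = (\<Sum>s\<in>SS. (if s \<in> GS \<beta>' k then M \<delta> * r s else 0) * s j)" for j
  proof -
    have "h j = (\<Sum>g\<in>GS \<beta>' k. (M \<delta> * r g) * g j)" unfolding h'(2) r
      by (simp add: sum_distrib_left mult.assoc)
    also have "\<dots> = (\<Sum>s\<in>SS. (if s \<in> GS \<beta>' k then M \<delta> * r s else 0) * s j)"
      by (rule comb_mono[OF SS_fin sub])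
    finally show ?thesis .
  qed
  then show ?thesis by (intro exI[of _ "\<lambda>s. if s \<in> GS \<beta>' k then M \<delta> * r s else 0"]) (rule ext)
qed

theorem main: "\<exists>S. finite S \<and> S \<subseteq> Sy \<and> (\<forall>s\<in>S. homogeneous_syz R x n m t alpha idx s) \<and>
           (\<forall>h\<in>Sy. \<exists>a. h = (\<lambda>j. \<Sum>s\<in>S. a s * s j))"
proof (intro exI[of _ SS] conjI ballI)
  show "finite SS" by (rule SS_fin)
  show "SS \<subseteq> Sy" by (rule SS_sub)
  show "\<And>s. s \<in> SS \<Longrightarrow> homogeneous_syz R x n m t alpha idx s" using SS_hom by blast
next
  fix h assume h: "h \<in> Sy"
  obtain P hp where P: "finite P" "\<forall>p\<in>P. fst p \<in> Exps n \<and> snd p < m \<and> hp p \<in> Hom (fst p) (snd p)"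
    "h = (\<lambda>j. \<Sum>p\<in>P. hp p j)" using decomp[OF h] by blast
  have "\<forall>p\<in>P. \<exists>a. hp p = (\<lambda>j. \<Sum>s\<in>SS. a s * s j)"
  proof
    fix p assume "p \<in> P"
    then have "fst p \<in> Exps n" "snd p < m" "hp p \<in> Hom (fst p) (snd p)" using P(2) by auto
    then show "\<exists>a. hp p = (\<lambda>j. \<Sum>s\<in>SS. a s * s j)" by (rule Hom_comb)
  qed
  from bchoice[OF this] obtain a where a: "\<forall>p\<in>P. hp p = (\<lambda>j. \<Sum>s\<in>SS. a p s * s j)" by blast
  have "h j = (\<Sum>s\<in>SS. (\<Sum>p\<in>P. a p s) * s j)" for j
  proof -
    have "h j = (\<Sum>p\<in>P. \<Sum>s\<in>SS. a p s * s j)" unfolding P(3) by (rule sum.cong[OF refl]) (use a in auto)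
    also have "\<dots> = (\<Sum>s\<in>SS. \<Sum>p\<in>P. a p s * s j)" by (rule sum.swap)
    also have "\<dots> = (\<Sum>s\<in>SS. (\<Sum>p\<in>P. a p s) * s j)" by (simp add: sum_distrib_right)
    finally show ?thesis .
  qed
  then show "\<exists>a. h = (\<lambda>j. \<Sum>s\<in>SS. a s * s j)" by (intro exI[of _ "\<lambda>s. \<Sum>p\<in>P. a p s"]) (rule ext)
qed

end


theorem proposition36:
  fixes R :: "'a::ring_1 set" and n m t :: nat and x :: "nat \<Rightarrow> 'a"
    and c :: "nat \<Rightarrow> 'a" and alpha :: "nat \<Rightarrow> nat \<Rightarrow> nat" and idx :: "nat \<Rightarrow> nat"
  assumes "sigma_PBW R n x" and "quasi_commutative R n x" and "bijective_PBW R n x"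
    and "left_noetherian R"
    and "\<forall>j<t. c j \<in> R - {0}"
    and "\<forall>j<t. alpha j \<in> Exps n"
    and "\<forall>j<t. idx j < m"
  shows "\<exists>S. finite S \<and> S \<subseteq> Syz x n t c alpha idx \<and>
           (\<forall>s\<in>S. homogeneous_syz R x n m t alpha idx s) \<and>
           (\<forall>h\<in>Syz x n t c alpha idx. \<exists>a. h = (\<lambda>j. \<Sum>s\<in>S. a s * s j))"
proof -
  interpret pbw_syz R n x m t c alpha idx
    by (intro pbw_syz.intro pbw.intro pbw_syz_axioms.intro) (use assms in auto)
  show ?thesis by (rule main)
qed

end
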